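(* Let $\Gamma$ be a group with $\operatorname{H}^1_b(\Gamma;\mathbb{R}) \cong 0$ and $\operatorname{H}^2_b(\Gamma;\mathbb{R}) \cong 0$. Then the second vanishing modulus of $\Gamma$ equals $1$.
   Context: $\operatorname{C}^n_b(\Gamma;\mathbb{R}) = \ell^\infty(\Gamma^{n+1})^\Gamma$ (bounded real functions invariant under the diagonal action) with supremum norm $|\cdot|_\infty$ and homogeneous coboundary $\delta^n_b$; $\operatorname{H}^*_b(\Gamma;\mathbb{R})$ is its cohomology. If $\operatorname{H}^n_b(\Gamma;\mathbb{R})\cong 0$, the $n$-th vanishing modulus of $\Gamma$ is the minimal $K \in \mathbb{R}_{\geq 0}\cup\{\infty\}$ such that for every $c \in \ker \delta^n_b$ there is $b \in \operatorname{C}^{n-1}_b(\Gamma;\mathbb{R})$ with $\delta^{n-1}_b(b) = c$ and $|b|_\infty \leq K|c|_\infty$. *)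

theory Defs
  imports Complex_Main "HOL-Library.Extended_Real"
begin

(* The group Gamma is a type 'a of class group_add (written additively, not
   necessarily commutative). An (n+1)-tuple in Gamma^(n+1) is a list of length n+1.
   A cochain of degree n is a function on lists that vanishes off length n+1. *)

definition bcochain :: "nat \<Rightarrow> ('a::group_add list \<Rightarrow> real) \<Rightarrow> bool" where
  "bcochain n c \<longleftrightarrow>
     (\<forall>xs. length xs \<noteq> Suc n \<longrightarrow> c xs = 0) \<and>
     (\<exists>B. \<forall>xs. length xs = Suc n \<longrightarrow> \<bar>c xs\<bar> \<le> B) \<and>
     (\<forall>g xs. length xs = Suc n \<longrightarrow> c (map (\<lambda>x. g + x) xs) = c xs)"

definition sup_norm :: "nat \<Rightarrow> ('a list \<Rightarrow> real) \<Rightarrow> real" where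
  "sup_norm n c = Sup {\<bar>c xs\<bar> | xs. length xs = Suc n}"

definition remove_nth :: "nat \<Rightarrow> 'a list \<Rightarrow> 'a list" where
  "remove_nth i xs = take i xs @ drop (Suc i) xs"

definition cob :: "nat \<Rightarrow> ('a list \<Rightarrow> real) \<Rightarrow> ('a list \<Rightarrow> real)" where
  "cob n c = (\<lambda>xs. if length xs = Suc (Suc n)
      then (\<Sum>i\<le>Suc n. (-1) ^ i * c (remove_nth i xs)) else 0)"

definition Hb_vanishes :: "'a::group_add itself \<Rightarrow> nat \<Rightarrow> bool" where
  "Hb_vanishes _ n \<longleftrightarrow>
     (\<forall>c::'a list \<Rightarrow> real. bcochain n c \<and> cob n c = (\<lambda>_. 0) \<longrightarrow>
        (if n = 0 then c = (\<lambda>_. 0)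
         else (\<exists>b::'a list \<Rightarrow> real. bcochain (n - 1) b \<and> cob (n - 1) b = c)))"

(* n-th vanishing modulus (n >= 1), as the infimum in [0,\<infinity>] of admissible constants *)
definition vanishing_modulus :: "'a::group_add itself \<Rightarrow> nat \<Rightarrow> ereal" where
  "vanishing_modulus _ n = Inf {K::ereal. K \<ge> 0 \<and>
     (\<forall>c::'a list \<Rightarrow> real. bcochain n c \<and> cob n c = (\<lambda>_. 0) \<longrightarrow>
        (\<exists>b::'a list \<Rightarrow> real. bcochain (n - 1) b \<and> cob (n - 1) b = c \<and>
           ereal (sup_norm (n - 1) b) \<le> K * ereal (sup_norm n c)))}"

end

theory Submission
  imports Defs
begin
lemma cob1_3: "cob 1 b [x,y,z] = b[y,z] - b[x,z] + b[x,y]"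
  by (simp add: cob_def remove_nth_def atMost_Suc numeral_2_eq_2)
lemma cob1_3': "cob (Suc 0) b [x,y,z] = b[y,z] - b[x,z] + b[x,y]"
  using cob1_3 by simp
lemma cob2_4: "cob 2 b [x,y,z,w] = b[y,z,w] - b[x,z,w] + b[x,y,w] - b[x,y,z]"
  by (simp add: cob_def remove_nth_def atMost_Suc numeral_2_eq_2 numeral_3_eq_3)
lemma len2: "length xs = Suc (Suc 0) \<Longrightarrow> \<exists>x y. xs = [x,y]"
  by (auto simp: length_Suc_conv)
lemma len3: "length xs = Suc (Suc (Suc 0)) \<Longrightarrow> \<exists>x y z. xs = [x,y,z]"
  by (auto simp: length_Suc_conv)
lemma len4: "length xs = Suc (Suc (Suc (Suc 0))) \<Longrightarrow> \<exists>x y z w. xs = [x,y,z,w]"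
  by (auto simp: length_Suc_conv)
lemma cobcob: "cob 2 (cob 1 (b::'a::group_add list \<Rightarrow> real)) = (\<lambda>_. 0)"
proof
  fix xs :: "'a list"
  show "cob 2 (cob 1 b) xs = 0"
  proof (cases "length xs = 4")
    case True
    have "\<exists>x y z w. xs = [x,y,z,w]" using True len4[of xs] by (simp add: numeral_eq_Suc)
    then obtain x y z w where "xs = [x,y,z,w]" by blast
    then show ?thesis by (simp add: cob2_4 cob1_3')
  next
    case False then show ?thesis by (simp add: cob_def)
  qed
qed

primrec itp :: "'a::group_add \<Rightarrow> nat \<Rightarrow> 'a" where
  "itp g 0 = 0" | "itp g (Suc n) = itp g n + g"

lemma bdd_norm:
  assumes "bcochain n c"
  shows "bdd_above {\<bar>c xs\<bar> | xs. length xs = Suc n}"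
  using assms unfolding bcochain_def bdd_above_def by fast

lemma le_norm:
  assumes "bcochain n c" "length xs = Suc n"
  shows "\<bar>c xs\<bar> \<le> sup_norm n c"
  unfolding sup_norm_def using assms by (intro cSup_upper bdd_norm) auto

lemma ub:
  fixes b :: "'a::group_add list \<Rightarrow> real"
  assumes bc: "bcochain 1 b" and cc: "bcochain 2 (cob 1 b)"
  shows "sup_norm 1 b \<le> sup_norm 2 (cob 1 b)"
proof -
  define D where "D = sup_norm 2 (cob 1 b)"
  have cD: "\<bar>cob 1 b [x,y,z]\<bar> \<le> D" for x y z
    unfolding D_def by (rule le_norm[OF cc]) simp
  obtain B where B: "\<And>xs. length xs = Suc (Suc 0) \<Longrightarrow> \<bar>b xs\<bar> \<le> B"
    using bc unfolding bcochain_def by auto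
  have inv: "b (map (\<lambda>x. g + x) xs) = b xs" if "length xs = 2" for g xs
    using bc that unfolding bcochain_def by auto
  define f where "f g = b [0, g]" for g
  have bf: "b [x,y] = f (-x + y)" for x y
    using inv[of "[x,y]" "-x"] by (simp add: f_def)
  have q: "\<bar>f (g + h) - f g - f h\<bar> \<le> D" for g h
  proof -
    have "cob 1 b [0,g,g+h] = f h - f (g+h) + f g"
      by (subst cob1_3) (simp add: bf add.assoc[symmetric])
    then show ?thesis using cD[of 0 g "g+h"] by simp
  qed
  have fB: "\<bar>f x\<bar> \<le> B" for x unfolding f_def by (rule B) simp
  have it: "\<bar>f (itp g (Suc n)) - real (Suc n) * f g\<bar> \<le> real n * D" for g n
  proof (induction n)
    case 0 then show ?case by simp
  next
    case (Suc n)
    have "\<bar>f (itp g (Suc n) + g) - f (itp g (Suc n)) - f g\<bar> \<le> D" by (rule q)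
    with Suc show ?case by (simp add: algebra_simps)
  qed
  have fD: "\<bar>f g\<bar> \<le> D" for g
  proof (rule ccontr)
    assume "\<not> ?thesis"
    then have pos: "\<bar>f g\<bar> - D > 0" by simp
    obtain n :: nat where n: "B / (\<bar>f g\<bar> - D) < real n" using reals_Archimedean2 by blast
    then have "B < real n * (\<bar>f g\<bar> - D)" using pos by (simp add: field_simps)
    moreover have "\<bar>f (itp g (Suc n)) - real (Suc n) * f g\<bar> \<le> real n * D" by (rule it)
    moreover have "\<bar>f (itp g (Suc n))\<bar> \<le> B" by (rule fB)
    moreover have "\<bar>real (Suc n) * f g\<bar> = real (Suc n) * \<bar>f g\<bar>" by (simp add: abs_mult)
    ultimately show False by (simp add: algebra_simps)
  qed
  have "Sup {\<bar>b xs\<bar> |xs. length xs = Suc 1} \<le> D"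
  proof (rule cSup_least)
    show "{\<bar>b xs\<bar> |xs. length xs = Suc 1} \<noteq> {}" by (auto intro: exI[of _ "[0,0]"])
  next
    fix x assume "x \<in> {\<bar>b xs\<bar> |xs. length xs = Suc 1}"
    then obtain xs where "x = \<bar>b xs\<bar>" "length xs = Suc (Suc 0)" by auto
    then show "x \<le> D" using len2 bf fD by metis
  qed
  then show ?thesis by (simp only: sup_norm_def D_def)
qed

definition b0 :: "'a::group_add list \<Rightarrow> real" where
  "b0 xs = (if length xs = 2 \<and> xs!0 = xs!1 then 1 else 0)"

lemma b0_bc: "bcochain 1 (b0 :: 'a::group_add list \<Rightarrow> real)"
  unfolding bcochain_def
proof (intro conjI allI impI)
  show "\<exists>B. \<forall>xs::'a list. length xs = Suc 1 \<longrightarrow> \<bar>b0 xs\<bar> \<le> B"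
    by (rule exI[of _ 1]) (simp add: b0_def)
next
  fix g and xs :: "'a list" assume "length xs = Suc 1"
  then have "\<exists>x y. xs = [x,y]" using len2 by simp
  then obtain x y where "xs = [x,y]" by blast
  then show "b0 (map ((+) g) xs) = b0 xs" by (simp add: b0_def)
qed (simp add: b0_def)

lemma c0_val: "cob (Suc 0) (b0::'a::group_add list \<Rightarrow> real) [x,y,z] =
   (if y = z then 1 else 0) - (if x = z then 1 else 0) + (if x = y then 1 else 0)"
  by (simp add: cob1_3' b0_def)

lemma c0_val1: "cob 1 (b0::'a::group_add list \<Rightarrow> real) [x,y,z] =
   (if y = z then 1 else 0) - (if x = z then 1 else 0) + (if x = y then 1 else 0)"
  by (simp only: cob1_3) (simp add: b0_def)

lemma c0_bc: "bcochain 2 (cob 1 (b0::'a::group_add list \<Rightarrow> real))"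
  unfolding bcochain_def
proof (intro conjI allI impI)
  show "\<exists>B. \<forall>xs::'a list. length xs = Suc 2 \<longrightarrow> \<bar>cob 1 b0 xs\<bar> \<le> B"
  proof (rule exI[of _ 3], intro allI impI)
    fix xs :: "'a list" assume "length xs = Suc 2"
    then have "\<exists>x y z. xs = [x,y,z]" using len3 by (simp add: numeral_eq_Suc)
    then obtain x y z where "xs = [x,y,z]" by blast
    then show "\<bar>cob 1 b0 xs\<bar> \<le> 3" by (simp add: c0_val1 del: One_nat_def)
  qed
next
  fix g and xs :: "'a list" assume "length xs = Suc 2"
  then have "\<exists>x y z. xs = [x,y,z]" using len3 by (simp add: numeral_eq_Suc)
  then obtain x y z where "xs = [x,y,z]" by blast
  then show "cob 1 b0 (map ((+) g) xs) = cob 1 b0 xs" by (simp only: c0_val1 list.map) simp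
qed (simp add: cob_def)

lemma c0_norm: "sup_norm 2 (cob 1 (b0::'a::group_add list \<Rightarrow> real)) = 1"
proof (rule antisym)
  show "sup_norm 2 (cob 1 (b0::'a::group_add list \<Rightarrow> real)) \<le> 1"
    unfolding sup_norm_def
  proof (rule cSup_least)
    show "{\<bar>cob 1 (b0::'a list \<Rightarrow> real) xs\<bar> |xs. length xs = Suc 2} \<noteq> {}"
      by (auto intro: exI[of _ "[0,0,0]"])
  next
    fix r assume "r \<in> {\<bar>cob 1 (b0::'a list \<Rightarrow> real) xs\<bar> |xs. length xs = Suc 2}"
    then obtain xs :: "'a list" where r: "r = \<bar>cob 1 b0 xs\<bar>" "length xs = Suc (Suc (Suc 0))"
      by (auto simp: numeral_eq_Suc)
    then obtain x y z where "xs = [x,y,z]" using len3 by blast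
    then show "r \<le> 1" using r by (simp add: c0_val1 del: One_nat_def)
  qed
next
  have "\<bar>cob 1 (b0::'a::group_add list \<Rightarrow> real) [0,0,0]\<bar> \<le> sup_norm 2 (cob 1 (b0::'a list \<Rightarrow> real))"
    by (rule le_norm[OF c0_bc]) simp
  then show "1 \<le> sup_norm 2 (cob 1 (b0::'a::group_add list \<Rightarrow> real))" by (simp add: c0_val1 del: One_nat_def)
qed

theorem proposition4p15:
  assumes "Hb_vanishes TYPE('a::group_add) 1"
      and "Hb_vanishes TYPE('a) 2"
  shows "vanishing_modulus TYPE('a) 2 = 1"
proof -
  let ?S = "{K::ereal. K \<ge> 0 \<and>
     (\<forall>c::'a list \<Rightarrow> real. bcochain 2 c \<and> cob 2 c = (\<lambda>_. 0) \<longrightarrow>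
        (\<exists>b::'a list \<Rightarrow> real. bcochain (2 - 1) b \<and> cob (2 - 1) b = c \<and>
           ereal (sup_norm (2 - 1) b) \<le> K * ereal (sup_norm 2 c)))}"
  have v: "vanishing_modulus TYPE('a) 2 = Inf ?S" by (simp add: vanishing_modulus_def)
  have one: "1 \<in> ?S"
  proof (rule CollectI, intro conjI allI impI)
    show "(0::ereal) \<le> 1" by simp
  next
    fix c :: "'a list \<Rightarrow> real"
    assume c: "bcochain 2 c \<and> cob 2 c = (\<lambda>_. 0)"
    then obtain b :: "'a list \<Rightarrow> real" where b: "bcochain 1 b" "cob 1 b = c"
      using assms(2) unfolding Hb_vanishes_def by auto
    have "sup_norm 1 b \<le> sup_norm 2 c" using ub[OF b(1)] b(2) c by simp
    then show "\<exists>b::'a list \<Rightarrow> real. bcochain (2 - 1) b \<and> cob (2 - 1) b = c \<and>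
           ereal (sup_norm (2 - 1) b) \<le> 1 * ereal (sup_norm 2 c)"
      using b by (intro exI[of _ b]) simp
  qed
  have ge: "1 \<le> K" if K: "K \<in> ?S" for K
  proof -
    have "bcochain 2 (cob 1 (b0::'a list \<Rightarrow> real)) \<and> cob 2 (cob 1 (b0::'a list \<Rightarrow> real)) = (\<lambda>_. 0)"
      using c0_bc cobcob by blast
    then obtain b :: "'a list \<Rightarrow> real" where b: "bcochain 1 b" "cob 1 b = cob 1 b0"
      "ereal (sup_norm 1 b) \<le> K * ereal (sup_norm 2 (cob 1 (b0::'a list \<Rightarrow> real)))"
      using K by auto
    have "\<bar>b [0,0]\<bar> \<le> sup_norm 1 b" by (rule le_norm[OF b(1)]) simp
    moreover have "b [0,0] = cob 1 b [0,0,0]" by (simp add: cob1_3')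
    moreover have "cob 1 (b0::'a list \<Rightarrow> real) [0,0,0] = 1" by (simp add: c0_val1 del: One_nat_def)
    ultimately have "1 \<le> sup_norm 1 b" using b(2) by simp
    then have "ereal 1 \<le> ereal (sup_norm 1 b)" by simp
    also have "\<dots> \<le> K" using b(3) by (simp add: c0_norm del: One_nat_def)
    finally show ?thesis by (simp add: one_ereal_def)
  qed
  show ?thesis unfolding v
  proof (rule antisym)
    show "Inf ?S \<le> 1" by (rule Inf_lower[OF one])
    show "1 \<le> Inf ?S" by (rule Inf_greatest) (rule ge)
  qed
qed

end
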